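(* Let $t\in[n]$, let $S\subseteq N$ be $t$-switchable, and suppose $a,b$ are connected in $S$ via a path $a_0=a,a_1,\dots,a_k=b$ in $S$. Let $L\subseteq[t]$ and $i,j\in\{0,\dots,k\}$. Then ${\rm s}(L,a_i,a_j)\in S$, and ${\rm s}(L,a_i,a_j)$ is connected to $a$ in $S$.
   Context: Fix positive integers $n, r_1,\dots,r_n$ and let $N=[r_1]\times\cdots\times[r_n]$. For $L\subseteq[n]$ and $a,b\in N$, ${\rm s}(L,a,b)\in N$ has $i$-th component $b_i$ if $i\in L$ and $a_i$ otherwise; ${\rm s}(i,a,b)={\rm s}(\{i\},a,b)$. Let $d(a,b)=\#\{j: a_j\neq b_j\}$. A subset $S\subseteq N$ is $t$-switchable if for all $a,b\in S$ with $d(a,b)=2$ and all $i\in[t]$, ${\rm s}(i,a,b)\in S$. A path in $S$ from $a$ to $b$ is a sequence $a_0=a,\dots,a_k=b$ of elements of $S$ with $a_{j-1}$ and $a_j$ differing in at most one component for all $j$; $a,b$ are connected in $S$ if such a path exists. *)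

theory Defs
  imports Main
begin

text \<open>Elements of N = [r_1] x ... x [r_n] are represented as functions nat => nat,
  with a i in {1..r i} for i in {1..n} and a i = 0 outside {1..n} (extensional convention).\<close>

definition gridN :: "nat \<Rightarrow> (nat \<Rightarrow> nat) \<Rightarrow> (nat \<Rightarrow> nat) set" where
  "gridN n r = {a. (\<forall>i\<in>{1..n}. a i \<in> {1..r i}) \<and> (\<forall>i. i \<notin> {1..n} \<longrightarrow> a i = 0)}"

definition swp :: "nat set \<Rightarrow> (nat \<Rightarrow> nat) \<Rightarrow> (nat \<Rightarrow> nat) \<Rightarrow> (nat \<Rightarrow> nat)" where
  "swp L a b = (\<lambda>i. if i \<in> L then b i else a i)"

definition hdist :: "nat \<Rightarrow> (nat \<Rightarrow> nat) \<Rightarrow> (nat \<Rightarrow> nat) \<Rightarrow> nat" where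
  "hdist n a b = card {j\<in>{1..n}. a j \<noteq> b j}"

definition switchable :: "nat \<Rightarrow> nat \<Rightarrow> (nat \<Rightarrow> nat) set \<Rightarrow> bool" where
  "switchable n t S \<longleftrightarrow>
     (\<forall>a\<in>S. \<forall>b\<in>S. hdist n a b = 2 \<longrightarrow> (\<forall>i\<in>{1..t}. swp {i} a b \<in> S))"

definition is_path :: "nat \<Rightarrow> (nat \<Rightarrow> nat) set \<Rightarrow> (nat \<Rightarrow> (nat \<Rightarrow> nat)) \<Rightarrow> nat
    \<Rightarrow> (nat \<Rightarrow> nat) \<Rightarrow> (nat \<Rightarrow> nat) \<Rightarrow> bool" where
  "is_path n S p k a b \<longleftrightarrow> p 0 = a \<and> p k = b \<and> (\<forall>j\<le>k. p j \<in> S) \<and>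
     (\<forall>j\<in>{1..k}. hdist n (p (j - 1)) (p j) \<le> 1)"

definition connected_in :: "nat \<Rightarrow> (nat \<Rightarrow> nat) set \<Rightarrow> (nat \<Rightarrow> nat) \<Rightarrow> (nat \<Rightarrow> nat) \<Rightarrow> bool" where
  "connected_in n S a b \<longleftrightarrow> (\<exists>p k. is_path n S p k a b)"

end

theory Submission
  imports Defs
begin

lemma swp_empty[simp]: "swp {} a b = a" by (simp add: swp_def)
lemma swp_same[simp]: "swp L a a = a" by (simp add: swp_def)

lemma hdist_sym: "hdist n a b = hdist n b a"
  unfolding hdist_def by (metis (mono_tags, lifting))

lemma path_extend:
  assumes "connected_in n S a u" "v \<in> S" "hdist n u v \<le> 1"
  shows "connected_in n S a v"
proof -
  obtain p k where p: "is_path n S p k a u" using assms(1) unfolding connected_in_def by blast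
  define q where "q = p(Suc k := v)"
  have "is_path n S q (Suc k) a v"
    unfolding is_path_def
  proof (intro conjI allI impI ballI)
    show "q 0 = a" using p by (simp add: q_def is_path_def)
    show "q (Suc k) = v" by (simp add: q_def)
    fix j assume "j \<le> Suc k" then show "q j \<in> S"
      using p assms(2) by (cases "j = Suc k") (auto simp: q_def is_path_def)
  next
    fix j assume j: "j \<in> {1..Suc k}"
    show "hdist n (q (j - 1)) (q j) \<le> 1"
    proof (cases "j = Suc k")
      case True then show ?thesis using p assms(3) by (simp add: q_def is_path_def)
    next
      case False then show ?thesis using p j by (auto simp: q_def is_path_def)
    qed
  qed
  then show ?thesis unfolding connected_in_def by blast
qed

lemma path_rev:
  assumes "is_path n S p k a b"
  shows "is_path n S (\<lambda>j. p (k - j)) k b a"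
  unfolding is_path_def
proof (intro conjI allI impI ballI)
  show "p (k - 0) = b" using assms by (simp add: is_path_def)
  show "p (k - k) = a" using assms by (simp add: is_path_def)
  fix j assume "j \<le> k" then show "p (k - j) \<in> S" using assms by (simp add: is_path_def)
next
  fix j assume j: "j \<in> {1..k}"
  have m: "Suc (k - j) \<in> {1..k}" using j by auto
  have "hdist n (p (Suc (k - j) - 1)) (p (Suc (k - j))) \<le> 1"
    using assms m unfolding is_path_def by blast
  then have "hdist n (p (k - j)) (p (Suc (k - j))) \<le> 1" by simp
  moreover have "k - (j - 1) = Suc (k - j)" using j by auto
  ultimately show "hdist n (p (k - (j - 1))) (p (k - j)) \<le> 1"
    by (simp add: hdist_sym)
qed

lemma path_prefix:
  assumes "is_path n S p k a b" "i \<le> k"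
  shows "connected_in n S a (p i)"
proof -
  have "is_path n S p i a (p i)" using assms by (auto simp: is_path_def)
  then show ?thesis unfolding connected_in_def by blast
qed

lemma step:
  assumes sw: "switchable n t S" and sub: "S \<subseteq> gridN n r" and tn: "t \<le> n"
    and xS: "x \<in> S" and xc: "connected_in n S a x"
    and d: "hdist n x' x \<le> 1"
    and prev: "\<forall>L\<subseteq>{1..t}. swp L x' y \<in> S \<and> connected_in n S a (swp L x' y)"
    and yS: "y \<in> S"
    and L: "L \<subseteq> {1..t}"
  shows "swp L x y \<in> S \<and> connected_in n S a (swp L x y)"
proof -
  have "finite L" using L finite_subset by blast
  then show ?thesis using L
  proof (induction L rule: finite_induct)
    case empty then show ?case using xS xc by simp
  next
    case (insert l L0)
    define W where "W = swp L0 x y"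
    define T where "T = swp (insert l L0) x y"
    define V where "V = swp (insert l L0) x' y"
    have W: "W \<in> S \<and> connected_in n S a W" using insert unfolding W_def by auto
    have V: "V \<in> S \<and> connected_in n S a V" using prev insert(4) unfolding V_def by blast
    have x'S: "x' \<in> S" using prev by (metis empty_subsetI swp_empty)
    have l: "l \<in> {1..t}" using insert by auto
    have zero: "\<And>f c. f \<in> S \<Longrightarrow> c \<notin> {1..n} \<Longrightarrow> f c = 0"
      using sub unfolding gridN_def by blast
    show ?case
    proof (cases "x l = y l")
      case True
      then have "T = W" unfolding T_def W_def swp_def by (auto simp: fun_eq_iff)
      then show ?thesis using W by (simp add: T_def[symmetric])
    next
      case xl: False
      show ?thesis
      proof (cases "\<forall>c. c \<notin> insert l L0 \<longrightarrow> x c = x' c")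
        case True
        then have "T = V" unfolding T_def V_def swp_def by (auto simp: fun_eq_iff)
        then show ?thesis using V by (simp add: T_def[symmetric] V_def[symmetric])
      next
        case False
        then obtain c where c: "c \<notin> insert l L0" "x c \<noteq> x' c" by blast
        have cn: "c \<in> {1..n}" using c zero xS x'S by metis
        define D where "D = {j\<in>{1..n}. x' j \<noteq> x j}"
        have "finite D" unfolding D_def by auto
        moreover have "card D \<le> Suc 0" using d unfolding D_def hdist_def by simp
        ultimately have "\<forall>u\<in>D. \<forall>v\<in>D. u = v" using card_le_Suc0_iff_eq by blast
        moreover have "c \<in> D" using c cn unfolding D_def by auto
        ultimately have uniq: "\<And>j. j \<in> {1..n} \<Longrightarrow> j \<noteq> c \<Longrightarrow> x' j = x j"
          unfolding D_def by blast
        have ln: "l \<in> {1..n}" using l tn by auto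
        have cl: "c \<noteq> l" using c by auto
        have set: "{j\<in>{1..n}. W j \<noteq> V j} = {c, l}"
          using uniq cn ln c xl insert(2) unfolding W_def V_def swp_def by auto
        have "hdist n W V = 2" unfolding hdist_def set using cl by simp
        then have "swp {l} W V \<in> S" using sw W V l unfolding switchable_def by blast
        moreover have "swp {l} W V = T"
          unfolding T_def W_def V_def swp_def by (auto simp: fun_eq_iff)
        ultimately have TS: "T \<in> S" by simp
        have "{j\<in>{1..n}. W j \<noteq> T j} \<subseteq> {l}"
          unfolding W_def T_def swp_def by auto
        then have "hdist n W T \<le> 1" unfolding hdist_def
          by (metis (no_types, lifting) card.empty card.insert card_mono empty_iff finite.intros One_nat_def)
        then have "connected_in n S a T" using path_extend W TS by blast
        then show ?thesis using TS by (simp add: T_def[symmetric])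
      qed
    qed
  qed
qed

theorem lemma3p5:
  fixes n t k i j :: nat and r :: "nat \<Rightarrow> nat" and S :: "(nat \<Rightarrow> nat) set"
    and a b :: "nat \<Rightarrow> nat" and p :: "nat \<Rightarrow> (nat \<Rightarrow> nat)" and L :: "nat set"
  assumes "r ` {1..n} \<subseteq> {1..}"
    and "t \<in> {1..n}"
    and "S \<subseteq> gridN n r"
    and "switchable n t S"
    and "is_path n S p k a b"
    and "L \<subseteq> {1..t}"
    and "i \<le> k" and "j \<le> k"
  shows "swp L (p i) (p j) \<in> S \<and> connected_in n S (swp L (p i) (p j)) a"
proof -
  note P = assms(5)
  have tn: "t \<le> n" using assms(2) by simp
  define Q where "Q m = (\<forall>L\<subseteq>{1..t}. swp L (p m) (p j) \<in> S \<and> connected_in n S a (swp L (p m) (p j)))" for m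
  have inS: "\<And>m. m \<le> k \<Longrightarrow> p m \<in> S" using P by (simp add: is_path_def)
  have adj: "\<And>m. m < k \<Longrightarrow> hdist n (p m) (p (Suc m)) \<le> 1"
  proof -
    fix m assume "m < k"
    then have "Suc m \<in> {1..k}" by auto
    then have "hdist n (p (Suc m - 1)) (p (Suc m)) \<le> 1" using P unfolding is_path_def by blast
    then show "hdist n (p m) (p (Suc m)) \<le> 1" by simp
  qed
  have Qj: "Q j" unfolding Q_def using inS[OF assms(8)] path_prefix[OF P assms(8)] by simp
  have up: "Q (Suc m)" if "Q m" "Suc m \<le> k" for m
    unfolding Q_def
    using step[OF assms(4) assms(3) tn inS[OF that(2)] path_prefix[OF P that(2)] adj[of m] _ inS[OF assms(8)]]
      that unfolding Q_def by auto
  have down: "Q m" if "Q (Suc m)" "Suc m \<le> k" for m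
  proof -
    have h: "hdist n (p (Suc m)) (p m) \<le> 1" using adj[of m] that(2) hdist_sym by simp
    show ?thesis unfolding Q_def
      using step[OF assms(4) assms(3) tn inS[of m] path_prefix[OF P, of m] h _ inS[OF assms(8)]]
        that unfolding Q_def by auto
  qed
  have "Q i"
  proof (cases "j \<le> i")
    case True
    have "\<forall>d. j + d \<le> k \<longrightarrow> Q (j + d)"
    proof
      fix d show "j + d \<le> k \<longrightarrow> Q (j + d)"
        by (induction d) (auto simp: Qj intro: up)
    qed
    moreover have "j + (i - j) \<le> k" using True assms(7) by simp
    ultimately have "Q (j + (i - j))" by blast
    then show ?thesis using True by simp
  next
    case False
    have "\<forall>d. d \<le> j \<longrightarrow> Q (j - d)"
    proof
      fix d show "d \<le> j \<longrightarrow> Q (j - d)"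
      proof (induction d)
        case 0 then show ?case using Qj by simp
      next
        case (Suc d)
        show ?case
        proof
          assume "Suc d \<le> j"
          then have "Suc (j - Suc d) = j - d" "j - d \<le> k" using assms(8) by auto
          moreover have "Q (j - d)" using Suc.IH \<open>Suc d \<le> j\<close> by simp
          ultimately have "Q (Suc (j - Suc d))" "Suc (j - Suc d) \<le> k" by simp_all
          then show "Q (j - Suc d)" by (rule down)
        qed
      qed
    qed
    then have "Q (j - (j - i))" by simp
    moreover have "j - (j - i) = i" using False by simp
    ultimately show ?thesis by simp
  qed
  then have "swp L (p i) (p j) \<in> S \<and> connected_in n S a (swp L (p i) (p j))"
    using assms(6) unfolding Q_def by blast
  then show ?thesis using path_rev unfolding connected_in_def by blast
qed

end
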